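(* Let $x_0 \in \mathbb R^{n_x}$ and $u_0 \in \mathbb R^{n_u} \times \{0,1\}^{m_u}$ with $(x_0,u_0) \in \mathcal D$, let $v_0 := V u_0$, let $e_0 \in \mathbb R^{n_x}$, and let $x_1 := A x_0 + B u_0 + e_0$. Let $\mathcal V_0 = [(\underline v_{t|0})_{t=0}^{T-1}, (\bar v_{t|0})_{t=0}^{T-1}]$ be an interval with $\underline v_{0|0} \le v_0 \le \bar v_{0|0}$, and let $\mathcal V_1 := [(\underline v_{1|0}, \ldots, \underline v_{T-1|0}, 0), (\bar v_{1|0}, \ldots, \bar v_{T-1|0}, 1)]$. Let $\{\lambda_{t|0}, \rho_{t|0}\}_{t=0}^{T}$, $\{\mu_{t|0}, \underline\nu_{t|0}, \bar\nu_{t|0}, \sigma_{t|0}\}_{t=0}^{T-1}$ be a certificate of infeasibility for $\mathbf P(\mathcal V_0; x_0)$, with dual objective value $\underline\theta_0(\mathcal V_0)$ (for $\mathbf D(\mathcal V_0; x_0)$). Define the shifted multipliers $(\lambda_{t|1}, \rho_{t|1}) := (\lambda_{t+1|0}, \rho_{t+1|0})$ for $t = 0,\ldots,T-1$, $(\lambda_{T|1}, \rho_{T|1}) := 0$, $(\mu_{t|1}, \underline\nu_{t|1}, \bar\nu_{t|1}, \sigma_{t|1}) := (\mu_{t+1|0}, \underline\nu_{t+1|0}, \bar\nu_{t+1|0}, \sigma_{t+1|0})$ for $t = 0,\ldots,T-2$, and $(\mu_{T-1|1}, \underline\nu_{T-1|1}, \bar\nu_{T-1|1}, \sigma_{T-1|1})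 := 0$. Let $\pi_3 := (h - F x_0 - G u_0)'\mu_{0|0} + (v_0 - \underline v_{0|0})'\underline\nu_{0|0} + (\bar v_{0|0} - v_0)'\bar\nu_{0|0}$. Then the shifted multipliers form a certificate of infeasibility for $\mathbf P(\mathcal V_1; x_1)$ whenever $\lambda_{1|0}' e_0 < \underline\theta_0(\mathcal V_0) + \pi_3$. Moreover, this inequality always holds if $e_0 = 0$.
   Context: Fix integers $n_x, n_u, m_u \ge 0$ and $T \ge 1$. Let $A \in \mathbb R^{n_x \times n_x}$, $B \in \mathbb R^{n_x \times (n_u+m_u)}$, and let $F, G, h$ define the polyhedron $\mathcal D = \{(x,u) \in \mathbb R^{n_x} \times \mathbb R^{n_u+m_u} : F x + G u \le h\}$, assumed to contain the origin. $V \in \mathbb R^{m_u \times (n_u+m_u)}$ is the selection matrix extracting the $m_u$ binary entries of an input vector. Let $Q$ (with $n_x$ columns) and $R$ (with $n_u+m_u$ columns) be weight matrices, possibly rank deficient. An interval is a set $\mathcal V = [(\underline v_t)_{t=0}^{T-1}, (\bar v_t)_{t=0}^{T-1}] \subset \mathbb R^{T m_u}$ with $\underline v_t, \bar v_t \in \{0,1\}^{m_u}$, $\underline v_t \le \bar v_t$; in $\mathcal V_1$ above the appended blocks $0,1$ are the all-zero and all-one vectors of $\mathbb R^{m_u}$. For an interval $\mathcal V$ and $\xi \in \mathbb R^{n_x}$, the QP $\mathbf P(\mathcal V; \xi)$ is: minimize $\sum_{t=0}^T |Q x_t|^2 + \sum_{t=0}^{T-1} |R u_t|^2$ over $x_0,\ldots,x_T$,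 $u_0, \ldots, u_{T-1}$ subject to $x_0 = \xi$, $x_{t+1} = A x_t + B u_t$, $(x_t, u_t) \in \mathcal D$, $\underline v_t \le V u_t \le \bar v_t$ ($t = 0, \ldots, T-1$). Its dual $\mathbf D(\mathcal V; \xi)$ is: maximize $$-\sum_{t=0}^{T} |\rho_t/2|^2 - \sum_{t=0}^{T-1}\big(|\sigma_t/2|^2 + h'\mu_t + \bar v_t'\bar\nu_t - \underline v_t'\underline\nu_t\big) - \xi'\lambda_0$$ over $\{\lambda_t, \rho_t\}_{t=0}^T$, $\{\mu_t, \underline\nu_t, \bar\nu_t, \sigma_t\}_{t=0}^{T-1}$ subject to: $Q'\rho_t + \lambda_t - A'\lambda_{t+1} + F'\mu_t = 0$ ($t=0,\ldots,T-1$); $Q'\rho_T + \lambda_T = 0$; $R'\sigma_t - B'\lambda_{t+1} + G'\mu_t + V'(\bar\nu_t - \underline\nu_t) = 0$ ($t = 0, \ldots, T-1$); $(\mu_t, \underline\nu_t, \bar\nu_t) \ge 0$. A certificate of infeasibility for $\mathbf P(\mathcal V;\xi)$ is a feasible point of $\mathbf D(\mathcal V;\xi)$ whose dual objective value is strictly positive and for which $\rho_t = 0$ and $\sigma_t = 0$ for all $t$. *)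

theory Defs
  imports Complex_Main "Jordan_Normal_Form.Matrix"
begin

(* Vectors/matrices are Jordan_Normal_Form vec/mat (dimension 0 allowed).
   Time-indexed sequences are functions nat => real vec; only indices in the
   relevant range matter. *)

definition vec_le :: "real vec \<Rightarrow> real vec \<Rightarrow> bool" where
  "vec_le a b \<longleftrightarrow> dim_vec a = dim_vec b \<and> (\<forall>i<dim_vec a. a $ i \<le> b $ i)"

definition nonneg_vec :: "real vec \<Rightarrow> bool" where
  "nonneg_vec a \<longleftrightarrow> (\<forall>i<dim_vec a. 0 \<le> a $ i)"

definition binary_vec :: "real vec \<Rightarrow> bool" where
  "binary_vec a \<longleftrightarrow> (\<forall>i<dim_vec a. a $ i = 0 \<or> a $ i = 1)"

definition ones_vec :: "nat \<Rightarrow> real vec" where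
  "ones_vec n = vec n (\<lambda>_. 1)"

(* Selection matrix V in R^{m_u x (n_u+m_u)} extracting the last m_u (binary) entries *)
definition sel_mat :: "nat \<Rightarrow> nat \<Rightarrow> real mat" where
  "sel_mat nu mu = mat mu (nu + mu) (\<lambda>(i, j). if j = nu + i then 1 else 0)"

definition in_D :: "real mat \<Rightarrow> real mat \<Rightarrow> real vec \<Rightarrow> real vec \<Rightarrow> real vec \<Rightarrow> bool" where
  "in_D F G h x u \<longleftrightarrow> vec_le (F *\<^sub>v x + G *\<^sub>v u) h"

definition is_interval :: "nat \<Rightarrow> nat \<Rightarrow> (nat \<Rightarrow> real vec) \<Rightarrow> (nat \<Rightarrow> real vec) \<Rightarrow> bool" where
  "is_interval mu T lo up \<longleftrightarrow>
     (\<forall>t<T. lo t \<in> carrier_vec mu \<and> up t \<in> carrier_vec mu \<and>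
            binary_vec (lo t) \<and> binary_vec (up t) \<and> vec_le (lo t) (up t))"

(* feasible set of the dual D(V; xi) (the constraints do not involve xi) *)
definition dual_feasible ::
  "real mat \<Rightarrow> real mat \<Rightarrow> real mat \<Rightarrow> real mat \<Rightarrow> real mat \<Rightarrow> real mat \<Rightarrow> real mat \<Rightarrow> nat \<Rightarrow>
   (nat \<Rightarrow> real vec) \<Rightarrow> (nat \<Rightarrow> real vec) \<Rightarrow> (nat \<Rightarrow> real vec) \<Rightarrow>
   (nat \<Rightarrow> real vec) \<Rightarrow> (nat \<Rightarrow> real vec) \<Rightarrow> (nat \<Rightarrow> real vec) \<Rightarrow> bool" where
  "dual_feasible A B F G V Q R T lam rho mu nlo nup sig \<longleftrightarrow>
     (\<forall>t\<le>T. lam t \<in> carrier_vec (dim_row A) \<and> rho t \<in> carrier_vec (dim_row Q)) \<and>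
     (\<forall>t<T. mu t \<in> carrier_vec (dim_row F) \<and> nlo t \<in> carrier_vec (dim_row V) \<and>
            nup t \<in> carrier_vec (dim_row V) \<and> sig t \<in> carrier_vec (dim_row R)) \<and>
     (\<forall>t<T. transpose_mat Q *\<^sub>v rho t + lam t - transpose_mat A *\<^sub>v lam (Suc t)
             + transpose_mat F *\<^sub>v mu t = 0\<^sub>v (dim_col A)) \<and>
     transpose_mat Q *\<^sub>v rho T + lam T = 0\<^sub>v (dim_col A) \<and>
     (\<forall>t<T. transpose_mat R *\<^sub>v sig t - transpose_mat B *\<^sub>v lam (Suc t)
             + transpose_mat G *\<^sub>v mu t + transpose_mat V *\<^sub>v (nup t - nlo t) = 0\<^sub>v (dim_col B)) \<and>
     (\<forall>t<T. nonneg_vec (mu t) \<and> nonneg_vec (nlo t) \<and> nonneg_vec (nup t))"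

definition sqn :: "real vec \<Rightarrow> real" where
  "sqn v = v \<bullet> v"

definition dual_obj ::
  "real vec \<Rightarrow> nat \<Rightarrow> (nat \<Rightarrow> real vec) \<Rightarrow> (nat \<Rightarrow> real vec) \<Rightarrow> real vec \<Rightarrow>
   (nat \<Rightarrow> real vec) \<Rightarrow> (nat \<Rightarrow> real vec) \<Rightarrow> (nat \<Rightarrow> real vec) \<Rightarrow>
   (nat \<Rightarrow> real vec) \<Rightarrow> (nat \<Rightarrow> real vec) \<Rightarrow> (nat \<Rightarrow> real vec) \<Rightarrow> real" where
  "dual_obj h T lo up xi lam rho mu nlo nup sig =
     - (\<Sum>t\<le>T. sqn ((1/2) \<cdot>\<^sub>v rho t))
     - (\<Sum>t<T. sqn ((1/2) \<cdot>\<^sub>v sig t) + h \<bullet> mu t + up t \<bullet> nup t - lo t \<bullet> nlo t)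
     - xi \<bullet> lam 0"

definition infeas_cert ::
  "real mat \<Rightarrow> real mat \<Rightarrow> real mat \<Rightarrow> real mat \<Rightarrow> real vec \<Rightarrow> real mat \<Rightarrow> real mat \<Rightarrow> real mat \<Rightarrow> nat \<Rightarrow>
   (nat \<Rightarrow> real vec) \<Rightarrow> (nat \<Rightarrow> real vec) \<Rightarrow> real vec \<Rightarrow>
   (nat \<Rightarrow> real vec) \<Rightarrow> (nat \<Rightarrow> real vec) \<Rightarrow> (nat \<Rightarrow> real vec) \<Rightarrow>
   (nat \<Rightarrow> real vec) \<Rightarrow> (nat \<Rightarrow> real vec) \<Rightarrow> (nat \<Rightarrow> real vec) \<Rightarrow> bool" where
  "infeas_cert A B F G h V Q R T lo up xi lam rho mu nlo nup sig \<longleftrightarrow>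
     dual_feasible A B F G V Q R T lam rho mu nlo nup sig \<and>
     (\<forall>t\<le>T. rho t = 0\<^sub>v (dim_row Q)) \<and>
     (\<forall>t<T. sig t = 0\<^sub>v (dim_row R)) \<and>
     dual_obj h T lo up xi lam rho mu nlo nup sig > 0"

end

theory Submission
  imports Defs
begin

lemma mat_vec_zero_h: "A \<in> carrier_mat m n \<Longrightarrow> A *\<^sub>v 0\<^sub>v n = (0\<^sub>v m :: real vec)"
  by (rule eq_vecI) (auto simp: mult_mat_vec_def scalar_prod_def)

lemma smult_zero_h: "(c::real) \<cdot>\<^sub>v 0\<^sub>v n = 0\<^sub>v n"
  by (rule eq_vecI) auto

lemma sqn_zero_h: "sqn ((c::real) \<cdot>\<^sub>v 0\<^sub>v n) = 0"
  unfolding sqn_def smult_zero_h by simp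

lemma nonneg_dot_h: "nonneg_vec a \<Longrightarrow> vec_le b c \<Longrightarrow> a \<in> carrier_vec n \<Longrightarrow> b \<in> carrier_vec n
  \<Longrightarrow> (0::real) \<le> (c - b) \<bullet> a"
  unfolding nonneg_vec_def vec_le_def scalar_prod_def
  by (auto intro!: sum_nonneg)

theorem corollary1:
  fixes nx nu mu nc nq nr T :: nat
    and A B F G Q R :: "real mat" and h :: "real vec"
    and x0 u0 e0 :: "real vec"
    and lo0 up0 lam0 rho0 mu0 nlo0 nup0 sig0 :: "nat \<Rightarrow> real vec"
  assumes T: "T \<ge> 1"
    and A: "A \<in> carrier_mat nx nx" and B: "B \<in> carrier_mat nx (nu + mu)"
    and F: "F \<in> carrier_mat nc nx" and G: "G \<in> carrier_mat nc (nu + mu)"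
    and h: "h \<in> carrier_vec nc"
    and D0: "in_D F G h (0\<^sub>v nx) (0\<^sub>v (nu + mu))"
    and Q: "Q \<in> carrier_mat nq nx" and R: "R \<in> carrier_mat nr (nu + mu)"
    and x0: "x0 \<in> carrier_vec nx" and u0: "u0 \<in> carrier_vec (nu + mu)"
    and u0_bin: "\<forall>i<mu. u0 $ (nu + i) = 0 \<or> u0 $ (nu + i) = 1"
    and x0u0: "in_D F G h x0 u0"
    and e0: "e0 \<in> carrier_vec nx"
    and V0: "is_interval mu T lo0 up0"
    and v0: "vec_le (lo0 0) (sel_mat nu mu *\<^sub>v u0) \<and> vec_le (sel_mat nu mu *\<^sub>v u0) (up0 0)"
    and cert0: "infeas_cert A B F G h (sel_mat nu mu) Q R T lo0 up0 x0
                  lam0 rho0 mu0 nlo0 nup0 sig0"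
  shows "let V = sel_mat nu mu;
             v0 = V *\<^sub>v u0;
             x1 = A *\<^sub>v x0 + B *\<^sub>v u0 + e0;
             lo1 = (\<lambda>t. if t < T - 1 then lo0 (Suc t) else 0\<^sub>v mu);
             up1 = (\<lambda>t. if t < T - 1 then up0 (Suc t) else ones_vec mu);
             lam1 = (\<lambda>t. if t < T then lam0 (Suc t) else 0\<^sub>v nx);
             rho1 = (\<lambda>t. if t < T then rho0 (Suc t) else 0\<^sub>v nq);
             mu1 = (\<lambda>t. if t < T - 1 then mu0 (Suc t) else 0\<^sub>v nc);
             nlo1 = (\<lambda>t. if t < T - 1 then nlo0 (Suc t) else 0\<^sub>v mu);
             nup1 = (\<lambda>t. if t < T - 1 then nup0 (Suc t) else 0\<^sub>v mu);
             sig1 = (\<lambda>t. if t < T - 1 then sig0 (Suc t) else 0\<^sub>v nr);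
             theta0 = dual_obj h T lo0 up0 x0 lam0 rho0 mu0 nlo0 nup0 sig0;
             pi3 = (h - F *\<^sub>v x0 - G *\<^sub>v u0) \<bullet> mu0 0 + (v0 - lo0 0) \<bullet> nlo0 0
                   + (up0 0 - v0) \<bullet> nup0 0
         in (lam0 1 \<bullet> e0 < theta0 + pi3 \<longrightarrow>
               infeas_cert A B F G h V Q R T lo1 up1 x1 lam1 rho1 mu1 nlo1 nup1 sig1)
            \<and> (e0 = 0\<^sub>v nx \<longrightarrow> lam0 1 \<bullet> e0 < theta0 + pi3)"
proof -
  obtain T' where TT: "T = Suc T'" using T by (cases T) auto
  define V where "V = sel_mat nu mu"
  have Vc: "V \<in> carrier_mat mu (nu+mu)" by (simp add: V_def sel_mat_def)
  have dA: "dim_row A = nx" "dim_col A = nx" using A by auto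
  have dB: "dim_col B = nu + mu" using B by auto
  have dF: "dim_row F = nc" using F by auto
  have dQ: "dim_row Q = nq" using Q by auto
  have dR: "dim_row R = nr" using R by auto
  have dV: "dim_row V = mu" using Vc by auto
  from cert0 have feas: "dual_feasible A B F G V Q R T lam0 rho0 mu0 nlo0 nup0 sig0"
    and rho0z: "\<And>t. t \<le> T \<Longrightarrow> rho0 t = 0\<^sub>v nq"
    and sig0z: "\<And>t. t < T \<Longrightarrow> sig0 t = 0\<^sub>v nr"
    and pos0: "dual_obj h T lo0 up0 x0 lam0 rho0 mu0 nlo0 nup0 sig0 > 0"
    unfolding infeas_cert_def V_def[symmetric] dQ dR by auto
  note fd = feas[unfolded dual_feasible_def dA dB dF dQ dR dV]
  have lamc: "\<And>t. t \<le> T \<Longrightarrow> lam0 t \<in> carrier_vec nx" using fd by auto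
  have rhoc: "\<And>t. t \<le> T \<Longrightarrow> rho0 t \<in> carrier_vec nq" using fd by auto
  have muc: "\<And>t. t < T \<Longrightarrow> mu0 t \<in> carrier_vec nc" using fd by auto
  have nloc: "\<And>t. t < T \<Longrightarrow> nlo0 t \<in> carrier_vec mu" using fd by auto
  have nupc: "\<And>t. t < T \<Longrightarrow> nup0 t \<in> carrier_vec mu" using fd by auto
  have sigc: "\<And>t. t < T \<Longrightarrow> sig0 t \<in> carrier_vec nr" using fd by auto
  have eqx: "\<And>t. t < T \<Longrightarrow> transpose_mat Q *\<^sub>v rho0 t + lam0 t - transpose_mat A *\<^sub>v lam0 (Suc t)
             + transpose_mat F *\<^sub>v mu0 t = 0\<^sub>v nx" using fd by auto
  have eqT: "transpose_mat Q *\<^sub>v rho0 T + lam0 T = 0\<^sub>v nx" using fd by auto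
  have equ: "\<And>t. t < T \<Longrightarrow> transpose_mat R *\<^sub>v sig0 t - transpose_mat B *\<^sub>v lam0 (Suc t)
             + transpose_mat G *\<^sub>v mu0 t + transpose_mat V *\<^sub>v (nup0 t - nlo0 t) = 0\<^sub>v (nu+mu)"
    using fd by auto
  have nn: "\<And>t. t < T \<Longrightarrow> nonneg_vec (mu0 t) \<and> nonneg_vec (nlo0 t) \<and> nonneg_vec (nup0 t)"
    using fd by auto
  have T0: "0 < T" using TT by simp
  note c0 = lamc[of 0] lamc[of 1] muc[OF T0] nloc[OF T0] nupc[OF T0]
  have lc0: "lam0 0 \<in> carrier_vec nx" and lc1: "lam0 1 \<in> carrier_vec nx"
    using lamc TT by auto
  have mc0: "mu0 0 \<in> carrier_vec nc" and nlc0: "nlo0 0 \<in> carrier_vec mu"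
    and nuc0: "nup0 0 \<in> carrier_vec mu" using muc nloc nupc T0 by auto
  have E1: "lam0 0 - transpose_mat A *\<^sub>v lam0 1 + transpose_mat F *\<^sub>v mu0 0 = 0\<^sub>v nx"
    using eqx[OF T0] rho0z[of 0] mat_vec_zero_h[of "transpose_mat Q" nx nq] Q lc0
    by (simp add: One_nat_def)
  have S1: "x0 \<bullet> lam0 0 = lam0 1 \<bullet> (A *\<^sub>v x0) - mu0 0 \<bullet> (F *\<^sub>v x0)"
  proof -
    have "(lam0 0 - transpose_mat A *\<^sub>v lam0 1 + transpose_mat F *\<^sub>v mu0 0) \<bullet> x0 = 0"
      using E1 x0 by simp
    then have "lam0 0 \<bullet> x0 - (transpose_mat A *\<^sub>v lam0 1) \<bullet> x0 + (transpose_mat F *\<^sub>v mu0 0) \<bullet> x0 = 0"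
      using lc0 lc1 mc0 x0 A F
      by (simp add: add_scalar_prod_distrib[of _ nx] minus_scalar_prod_distrib[of _ nx])
    then show ?thesis
      using transpose_vec_mult_scalar[OF A x0 lc1] transpose_vec_mult_scalar[OF F x0 mc0]
        comm_scalar_prod[OF x0 lc0] by simp
  qed
  have vc: "V *\<^sub>v u0 \<in> carrier_vec mu" using Vc u0 by simp
  have E2: "- (transpose_mat B *\<^sub>v lam0 1) + transpose_mat G *\<^sub>v mu0 0
             + transpose_mat V *\<^sub>v (nup0 0 - nlo0 0) = 0\<^sub>v (nu+mu)"
  proof -
    have "transpose_mat R *\<^sub>v sig0 0 = 0\<^sub>v (nu+mu)"
      using sig0z[OF T0] mat_vec_zero_h[of "transpose_mat R" "nu+mu" nr] R by simp
    moreover have "transpose_mat B *\<^sub>v lam0 1 \<in> carrier_vec (nu+mu)" using B lc1 by simp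
    ultimately show ?thesis using equ[OF T0] by (simp add: One_nat_def)
  qed
  have S2: "lam0 1 \<bullet> (B *\<^sub>v u0) = mu0 0 \<bullet> (G *\<^sub>v u0) + nup0 0 \<bullet> (V *\<^sub>v u0) - nlo0 0 \<bullet> (V *\<^sub>v u0)"
  proof -
    have "(- (transpose_mat B *\<^sub>v lam0 1) + transpose_mat G *\<^sub>v mu0 0
             + transpose_mat V *\<^sub>v (nup0 0 - nlo0 0)) \<bullet> u0 = 0"
      using E2 u0 by simp
    then have "- ((transpose_mat B *\<^sub>v lam0 1) \<bullet> u0) + (transpose_mat G *\<^sub>v mu0 0) \<bullet> u0
             + (transpose_mat V *\<^sub>v (nup0 0 - nlo0 0)) \<bullet> u0 = 0"
      using lc1 mc0 nlc0 nuc0 u0 B G Vc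
      by (simp add: add_scalar_prod_distrib[of _ "nu+mu"])
    then show ?thesis
      using transpose_vec_mult_scalar[OF B u0 lc1] transpose_vec_mult_scalar[OF G u0 mc0]
        transpose_vec_mult_scalar[OF Vc u0, of "nup0 0 - nlo0 0"] nlc0 nuc0 vc
      by (simp add: minus_scalar_prod_distrib[of _ mu])
  qed
  define g where "g t = h \<bullet> mu0 t + up0 t \<bullet> nup0 t - lo0 t \<bullet> nlo0 t" for t
  have th0: "dual_obj h T lo0 up0 x0 lam0 rho0 mu0 nlo0 nup0 sig0
      = - (g 0 + (\<Sum>t<T'. g (Suc t))) - x0 \<bullet> lam0 0"
  proof -
    have a: "(\<Sum>t\<le>T. sqn ((1/2) \<cdot>\<^sub>v rho0 t)) = 0"
      by (rule sum.neutral) (simp add: rho0z sqn_zero_h)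
    have b: "(\<Sum>t<T. sqn ((1/2) \<cdot>\<^sub>v sig0 t) + h \<bullet> mu0 t + up0 t \<bullet> nup0 t - lo0 t \<bullet> nlo0 t)
       = (\<Sum>t<T. g t)"
      by (rule sum.cong) (simp_all add: sig0z sqn_zero_h g_def)
    show ?thesis unfolding dual_obj_def a b unfolding TT sum.lessThan_Suc_shift by simp
  qed
  define x1 where "x1 = A *\<^sub>v x0 + B *\<^sub>v u0 + e0"
  define lo1 where "lo1 = (\<lambda>t. if t < T - 1 then lo0 (Suc t) else 0\<^sub>v mu)"
  define up1 where "up1 = (\<lambda>t. if t < T - 1 then up0 (Suc t) else ones_vec mu)"
  define lam1 where "lam1 = (\<lambda>t. if t < T then lam0 (Suc t) else 0\<^sub>v nx)"
  define rho1 where "rho1 = (\<lambda>t. if t < T then rho0 (Suc t) else 0\<^sub>v nq)"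
  define mu1 where "mu1 = (\<lambda>t. if t < T - 1 then mu0 (Suc t) else 0\<^sub>v nc)"
  define nlo1 where "nlo1 = (\<lambda>t. if t < T - 1 then nlo0 (Suc t) else 0\<^sub>v mu)"
  define nup1 where "nup1 = (\<lambda>t. if t < T - 1 then nup0 (Suc t) else 0\<^sub>v mu)"
  define sig1 where "sig1 = (\<lambda>t. if t < T - 1 then sig0 (Suc t) else 0\<^sub>v nr)"
  have th1: "dual_obj h T lo1 up1 x1 lam1 rho1 mu1 nlo1 nup1 sig1
      = - (\<Sum>t<T'. g (Suc t)) - x1 \<bullet> lam0 1"
  proof -
    have a: "(\<Sum>t\<le>T. sqn ((1/2) \<cdot>\<^sub>v rho1 t)) = 0"
      by (rule sum.neutral) (simp add: rho1_def rho0z sqn_zero_h)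
    have b: "(\<Sum>t<T. sqn ((1/2) \<cdot>\<^sub>v sig1 t) + h \<bullet> mu1 t + up1 t \<bullet> nup1 t - lo1 t \<bullet> nlo1 t)
       = (\<Sum>t<T'. g (Suc t))"
    proof -
      have "(\<Sum>t<T. sqn ((1/2) \<cdot>\<^sub>v sig1 t) + h \<bullet> mu1 t + up1 t \<bullet> nup1 t - lo1 t \<bullet> nlo1 t)
         = (\<Sum>t<T'. sqn ((1/2) \<cdot>\<^sub>v sig1 t) + h \<bullet> mu1 t + up1 t \<bullet> nup1 t - lo1 t \<bullet> nlo1 t)
           + (sqn ((1/2) \<cdot>\<^sub>v sig1 T') + h \<bullet> mu1 T' + up1 T' \<bullet> nup1 T' - lo1 T' \<bullet> nlo1 T')"
        unfolding TT by simp
      also have "sqn ((1/2) \<cdot>\<^sub>v sig1 T') + h \<bullet> mu1 T' + up1 T' \<bullet> nup1 T' - lo1 T' \<bullet> nlo1 T' = 0"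
        using h by (simp add: sig1_def mu1_def up1_def nup1_def lo1_def nlo1_def TT sqn_zero_h
            ones_vec_def)
      also have "(\<Sum>t<T'. sqn ((1/2) \<cdot>\<^sub>v sig1 t) + h \<bullet> mu1 t + up1 t \<bullet> nup1 t - lo1 t \<bullet> nlo1 t)
          = (\<Sum>t<T'. g (Suc t))"
        by (rule sum.cong) (simp_all add: sig1_def mu1_def up1_def nup1_def lo1_def nlo1_def TT
            sig0z sqn_zero_h g_def)
      finally show ?thesis by simp
    qed
    show ?thesis unfolding dual_obj_def a b by (simp add: lam1_def TT)
  qed
  have loc0: "lo0 0 \<in> carrier_vec mu" and upc0: "up0 0 \<in> carrier_vec mu"
    using V0 T0 unfolding is_interval_def by auto
  have Fx: "F *\<^sub>v x0 \<in> carrier_vec nc" and Gu: "G *\<^sub>v u0 \<in> carrier_vec nc"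
    and Ax: "A *\<^sub>v x0 \<in> carrier_vec nx" and Bu: "B *\<^sub>v u0 \<in> carrier_vec nx"
    using F G A B x0 u0 by auto
  define pi3 where "pi3 = (h - F *\<^sub>v x0 - G *\<^sub>v u0) \<bullet> mu0 0 + (V *\<^sub>v u0 - lo0 0) \<bullet> nlo0 0
                   + (up0 0 - V *\<^sub>v u0) \<bullet> nup0 0"
  have P: "pi3 = h \<bullet> mu0 0 - (F *\<^sub>v x0) \<bullet> mu0 0 - (G *\<^sub>v u0) \<bullet> mu0 0
     + (V *\<^sub>v u0) \<bullet> nlo0 0 - lo0 0 \<bullet> nlo0 0 + up0 0 \<bullet> nup0 0 - (V *\<^sub>v u0) \<bullet> nup0 0"
    unfolding pi3_def using h Fx Gu mc0 vc loc0 upc0 nlc0 nuc0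
    by (simp add: minus_scalar_prod_distrib[of _ nc] minus_scalar_prod_distrib[of _ mu])
  have X1: "x1 \<bullet> lam0 1 = (A *\<^sub>v x0) \<bullet> lam0 1 + (B *\<^sub>v u0) \<bullet> lam0 1 + e0 \<bullet> lam0 1"
    unfolding x1_def using Ax Bu e0 lc1
    by (simp add: add_scalar_prod_distrib[of _ nx])
  have cm2: "(A *\<^sub>v x0) \<bullet> lam0 1 = lam0 1 \<bullet> (A *\<^sub>v x0)" "(B *\<^sub>v u0) \<bullet> lam0 1 = lam0 1 \<bullet> (B *\<^sub>v u0)"
     "e0 \<bullet> lam0 1 = lam0 1 \<bullet> e0"
    using comm_scalar_prod Ax Bu e0 lc1 by metis+
  have cm: "mu0 0 \<bullet> (F *\<^sub>v x0) = (F *\<^sub>v x0) \<bullet> mu0 0" "mu0 0 \<bullet> (G *\<^sub>v u0) = (G *\<^sub>v u0) \<bullet> mu0 0"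
    "nup0 0 \<bullet> (V *\<^sub>v u0) = (V *\<^sub>v u0) \<bullet> nup0 0" "nlo0 0 \<bullet> (V *\<^sub>v u0) = (V *\<^sub>v u0) \<bullet> nlo0 0"
    using comm_scalar_prod mc0 Fx Gu nuc0 nlc0 vc by metis+
  have key: "dual_obj h T lo1 up1 x1 lam1 rho1 mu1 nlo1 nup1 sig1
     = dual_obj h T lo0 up0 x0 lam0 rho0 mu0 nlo0 nup0 sig0 + pi3 - lam0 1 \<bullet> e0"
    unfolding th0 th1 using X1 P S1 S2 cm cm2 unfolding g_def by linarith
  have pi3_nn: "0 \<le> pi3"
  proof -
    have nn0: "nonneg_vec (mu0 0)" "nonneg_vec (nlo0 0)" "nonneg_vec (nup0 0)" using nn[OF T0] by auto
    have gen: "0 \<le> w \<bullet> a" if "nonneg_vec a" "\<forall>i<n. 0 \<le> w $ i" "a \<in> carrier_vec n" "w \<in> carrier_vec n"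
      for a w :: "real vec" and n
      using that unfolding nonneg_vec_def scalar_prod_def by (auto intro!: sum_nonneg)
    have "0 \<le> (h - F *\<^sub>v x0 - G *\<^sub>v u0) \<bullet> mu0 0"
    proof (rule gen[OF nn0(1) _ mc0])
      show "\<forall>i<nc. 0 \<le> (h - F *\<^sub>v x0 - G *\<^sub>v u0) $ i"
      proof (intro allI impI)
        fix i assume i: "i < nc"
        have d: "dim_vec (F *\<^sub>v x0 + G *\<^sub>v u0) = nc" using G by simp
        have "\<forall>i<dim_vec (F *\<^sub>v x0 + G *\<^sub>v u0). (F *\<^sub>v x0 + G *\<^sub>v u0) $ i \<le> h $ i"
          using x0u0 unfolding in_D_def vec_le_def by blast
        then have "(F *\<^sub>v x0 + G *\<^sub>v u0) $ i \<le> h $ i" unfolding d using i by blast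
        moreover have "(F *\<^sub>v x0 + G *\<^sub>v u0) $ i = (F *\<^sub>v x0) $ i + (G *\<^sub>v u0) $ i"
          using i G by (intro index_add_vec(1)) simp
        moreover have "(h - F *\<^sub>v x0 - G *\<^sub>v u0) $ i = h $ i - (F *\<^sub>v x0) $ i - (G *\<^sub>v u0) $ i"
          using i F G by (subst index_minus_vec(1), simp, subst index_minus_vec(1), simp_all)
        ultimately show "0 \<le> (h - F *\<^sub>v x0 - G *\<^sub>v u0) $ i" by linarith
      qed
    qed (use h Fx Gu in auto)
    moreover have "0 \<le> (V *\<^sub>v u0 - lo0 0) \<bullet> nlo0 0"
      apply (rule gen[OF nn0(2) _ nlc0])
      using v0 vc loc0 unfolding V_def[symmetric] vec_le_def by auto
    moreover have "0 \<le> (up0 0 - V *\<^sub>v u0) \<bullet> nup0 0"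
      apply (rule gen[OF nn0(3) _ nuc0])
      using v0 vc upc0 unfolding V_def[symmetric] vec_le_def by auto
    ultimately show ?thesis unfolding pi3_def by linarith
  qed
  have Tm: "T - 1 = T'" using TT by simp
  have feas1: "dual_feasible A B F G V Q R T lam1 rho1 mu1 nlo1 nup1 sig1"
    unfolding dual_feasible_def dA dB dF dQ dR dV
  proof (intro conjI allI impI)
    fix t assume t: "t \<le> T"
    show "lam1 t \<in> carrier_vec nx" using t lamc by (simp add: lam1_def)
    show "rho1 t \<in> carrier_vec nq" using t rhoc by (simp add: rho1_def)
  next
    fix t assume t: "t < T"
    show "mu1 t \<in> carrier_vec nc" using t muc by (simp add: mu1_def Tm TT)
    show "nlo1 t \<in> carrier_vec mu" using t nloc by (simp add: nlo1_def Tm TT)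
    show "nup1 t \<in> carrier_vec mu" using t nupc by (simp add: nup1_def Tm TT)
    show "sig1 t \<in> carrier_vec nr" using t sigc by (simp add: sig1_def Tm TT)
  next
    fix t assume t: "t < T"
    show "transpose_mat Q *\<^sub>v rho1 t + lam1 t - transpose_mat A *\<^sub>v lam1 (Suc t)
             + transpose_mat F *\<^sub>v mu1 t = 0\<^sub>v nx"
    proof (cases "t < T'")
      case True
      then show ?thesis using eqx[of "Suc t"] TT
        by (simp add: rho1_def lam1_def mu1_def Tm)
    next
      case False
      then have tT: "t = T'" using t TT by simp
      have "transpose_mat A *\<^sub>v 0\<^sub>v nx = 0\<^sub>v nx" "transpose_mat F *\<^sub>v 0\<^sub>v nc = 0\<^sub>v nx"
        using A F by (auto intro: mat_vec_zero_h)
      moreover have "transpose_mat Q *\<^sub>v rho0 T \<in> carrier_vec nx" using Q rhoc by simp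
      ultimately show ?thesis using eqT lamc[of T] tT TT
        by (simp add: rho1_def lam1_def mu1_def Tm)
    qed
  next
    show "transpose_mat Q *\<^sub>v rho1 T + lam1 T = 0\<^sub>v nx"
      using mat_vec_zero_h[of "transpose_mat Q" nx nq] Q by (simp add: rho1_def lam1_def)
  next
    fix t assume t: "t < T"
    show "transpose_mat R *\<^sub>v sig1 t - transpose_mat B *\<^sub>v lam1 (Suc t)
             + transpose_mat G *\<^sub>v mu1 t + transpose_mat V *\<^sub>v (nup1 t - nlo1 t) = 0\<^sub>v (nu+mu)"
    proof (cases "t < T'")
      case True
      then show ?thesis using equ[of "Suc t"] TT
        by (simp add: sig1_def lam1_def mu1_def nup1_def nlo1_def Tm)
    next
      case False
      then have tT: "t = T'" using t TT by simp
      have "transpose_mat R *\<^sub>v 0\<^sub>v nr = 0\<^sub>v (nu+mu)" "transpose_mat B *\<^sub>v 0\<^sub>v nx = 0\<^sub>v (nu+mu)"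
        "transpose_mat G *\<^sub>v 0\<^sub>v nc = 0\<^sub>v (nu+mu)" "transpose_mat V *\<^sub>v 0\<^sub>v mu = 0\<^sub>v (nu+mu)"
        using R B G Vc by (auto intro: mat_vec_zero_h)
      moreover have "0\<^sub>v mu - 0\<^sub>v mu = (0\<^sub>v mu :: real vec)" by simp
      ultimately show ?thesis using tT TT
        by (simp add: sig1_def lam1_def mu1_def nup1_def nlo1_def Tm)
    qed
  next
    fix t assume t: "t < T"
    show "nonneg_vec (mu1 t)" "nonneg_vec (nlo1 t)" "nonneg_vec (nup1 t)"
      using nn[of "Suc t"] t by (auto simp: mu1_def nlo1_def nup1_def Tm TT nonneg_vec_def)
  qed
  have rz: "\<forall>t\<le>T. rho1 t = 0\<^sub>v (dim_row Q)" using rho0z by (simp add: rho1_def dQ)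
  have sz: "\<forall>t<T. sig1 t = 0\<^sub>v (dim_row R)" using sig0z by (simp add: sig1_def dR Tm TT)
  have part1: "lam0 1 \<bullet> e0 < dual_obj h T lo0 up0 x0 lam0 rho0 mu0 nlo0 nup0 sig0 + pi3 \<Longrightarrow>
      infeas_cert A B F G h V Q R T lo1 up1 x1 lam1 rho1 mu1 nlo1 nup1 sig1"
    unfolding infeas_cert_def using feas1 rz sz key by simp
  have part2: "e0 = 0\<^sub>v nx \<Longrightarrow> lam0 1 \<bullet> e0 < dual_obj h T lo0 up0 x0 lam0 rho0 mu0 nlo0 nup0 sig0 + pi3"
    using pos0 pi3_nn lc1 by simp
  show ?thesis
    unfolding Let_def V_def[symmetric] x1_def[symmetric] lo1_def[symmetric] up1_def[symmetric]
      lam1_def[symmetric] rho1_def[symmetric] mu1_def[symmetric] nlo1_def[symmetric]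
      nup1_def[symmetric] sig1_def[symmetric] pi3_def[symmetric]
    using part1 part2 by blast
qed

end
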